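(* Let $a_1,a_2>0$, let $\omega=\{\mathbf y=(y_1,y_2)\in\mathbb R^2:\ y_1^2/a_1^2+y_2^2/a_2^2<1\}$ be the open elliptical domain with boundary $\Gamma=\partial\omega$, set $s=a_2/a_1$, and define $$\theta(\mathbf y)=1-\frac{y_1^2}{a_1^2}-\frac{y_2^2}{a_2^2},\qquad \bar p(\mathbf y)=p_0\,\theta(\mathbf y)^2,\qquad \rho(\mathbf y)=\Bigl(\frac{s\,y_1^2}{a_1^2}+\frac{y_2^2}{s\,a_2^2}\Bigr)\theta(\mathbf y),$$ where $p_0>0$ is a constant. Let $m>0$, $h_1,h_2>0$, $E_1,E_2>0$ be constants, and let $\tilde H_1,\tilde H_2$ be continuously differentiable real functions on $\overline{\omega}$. Suppose $\tilde p\in C^2(\overline\omega)$ solves $$-m^{-1}\Delta_y\tilde p(\mathbf y)=\sum_{\alpha=1}^2\frac{3h_\alpha^2}{E_\alpha}\nabla_y\cdot\bigl(\tilde H_\alpha(\mathbf y)\nabla_y\bar p(\mathbf y)\bigr),\quad \mathbf y\in\omega,\qquad \tilde p(\mathbf y)=0,\quad \mathbf y\in\Gamma.$$ Then $$\iint_\omega\tilde p(\mathbf y)\,d\mathbf y=0\quad\text{if and only if}\quad \sum_{\alpha=1}^2\frac{h_\alpha^2}{E_\alpha}\iint_\omega\tilde H_\alpha(\mathbf y)\,\rho(\mathbf y)\,d\mathbf y=0.$$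
   Context: $\Delta_y=\partial^2/\partial y_1^2+\partial^2/\partial y_2^2$ is the Laplacian and $\nabla_y=(\partial/\partial y_1,\partial/\partial y_2)$ the gradient in the plane variables $\mathbf y=(y_1,y_2)$; the dot denotes the Euclidean scalar product. In the application, $\tilde p$ is the first-order variation of the contact pressure caused by small thickness variations $\tilde H_\alpha$ of two thin incompressible elastic layers (thicknesses $h_\alpha$, Young's moduli $E_\alpha$, $m=(E_1^{-1}h_1^3+E_2^{-1}h_2^3)^{-1}$), and $\bar p$ is the unperturbed pressure on the elliptical contact region $\omega$. *)

theory Defs
  imports "HOL-Analysis.Analysis"
begin

definition ellipse :: "real \<Rightarrow> real \<Rightarrow> (real \<times> real) set" where
  "ellipse a1 a2 = {y. (fst y)\<^sup>2 / a1\<^sup>2 + (snd y)\<^sup>2 / a2\<^sup>2 < 1}"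

definition pd1 :: "(real \<times> real \<Rightarrow> real) \<Rightarrow> real \<times> real \<Rightarrow> real" where
  "pd1 f y = deriv (\<lambda>t. f (t, snd y)) (fst y)"

definition pd2 :: "(real \<times> real \<Rightarrow> real) \<Rightarrow> real \<times> real \<Rightarrow> real" where
  "pd2 f y = deriv (\<lambda>t. f (fst y, t)) (snd y)"

definition laplacian :: "(real \<times> real \<Rightarrow> real) \<Rightarrow> real \<times> real \<Rightarrow> real" where
  "laplacian f y = pd1 (pd1 f) y + pd2 (pd2 f) y"

definition div_H_grad :: "(real \<times> real \<Rightarrow> real) \<Rightarrow> (real \<times> real \<Rightarrow> real) \<Rightarrow> real \<times> real \<Rightarrow> real" where
  "div_H_grad H P y = pd1 (\<lambda>z. H z * pd1 P z) y + pd2 (\<lambda>z. H z * pd2 P z) y"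

text \<open>C^1 on the closure of a bounded open set S: continuous on the closure, differentiable
  in S, with first partial derivatives uniformly continuous on S (equivalently, extending
  continuously to the closure, S being bounded).\<close>
definition C1_closure :: "(real \<times> real) set \<Rightarrow> (real \<times> real \<Rightarrow> real) \<Rightarrow> bool" where
  "C1_closure S f \<longleftrightarrow> continuous_on (closure S) f \<and> f differentiable_on S \<and>
     uniformly_continuous_on S (pd1 f) \<and> uniformly_continuous_on S (pd2 f)"

definition C2_closure :: "(real \<times> real) set \<Rightarrow> (real \<times> real \<Rightarrow> real) \<Rightarrow> bool" where
  "C2_closure S f \<longleftrightarrow> C1_closure S f \<and>
     pd1 f differentiable_on S \<and> pd2 f differentiable_on S \<and>
     uniformly_continuous_on S (pd1 (pd1 f)) \<and> uniformly_continuous_on S (pd2 (pd1 f)) \<and>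
     uniformly_continuous_on S (pd1 (pd2 f)) \<and> uniformly_continuous_on S (pd2 (pd2 f))"

definition theta :: "real \<Rightarrow> real \<Rightarrow> real \<times> real \<Rightarrow> real" where
  "theta a1 a2 y = 1 - (fst y)\<^sup>2 / a1\<^sup>2 - (snd y)\<^sup>2 / a2\<^sup>2"

definition pbar :: "real \<Rightarrow> real \<Rightarrow> real \<Rightarrow> real \<times> real \<Rightarrow> real" where
  "pbar p0 a1 a2 y = p0 * (theta a1 a2 y)\<^sup>2"

definition rho :: "real \<Rightarrow> real \<Rightarrow> real \<times> real \<Rightarrow> real" where
  "rho a1 a2 y = (let s = a2 / a1 in
     (s * (fst y)\<^sup>2 / a1\<^sup>2 + (snd y)\<^sup>2 / (s * a2\<^sup>2)) * theta a1 a2 y)"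

end

theory Submission
  imports Defs
begin


lemma inner1d:
  fixes \<phi> \<delta> :: "real \<Rightarrow> real" and r :: real
  assumes r: "r > 0"
    and der: "\<And>t. t \<in> {-r<..<r} \<Longrightarrow> (\<phi> has_real_derivative \<delta> t) (at t)"
    and lr: "(\<phi> \<longlongrightarrow> 0) (at_left r)" and ll: "(\<phi> \<longlongrightarrow> 0) (at_right (-r))"
  shows "((\<lambda>t. if t \<in> {-r<..<r} then \<delta> t else 0) has_integral 0) UNIV"
proof -
  define G where "G t = (if t \<in> {-r<..<r} then \<phi> t else 0)" for t
  have GD: "(G has_real_derivative \<delta> t) (at t)" if "t \<in> {-r<..<r}" for t
    by (rule has_field_derivative_transform_within_open[OF der[OF that] _ that]) (auto simp: G_def)
  have cont: "continuous_on {-r..r} G"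
  proof (rule continuous_on_IccI)
    have e1: "\<forall>\<^sub>F t in at_right (-r). \<phi> t = G t"
      by (rule eventually_mono[OF eventually_at_right_real[of "-r" r]]) (use r in \<open>auto simp: G_def\<close>)
    show "(G \<longlongrightarrow> G (-r)) (at_right (-r))"
    proof - have "G (-r) = 0" by (simp add: G_def) thus ?thesis using tendsto_cong[OF e1] ll by simp qed
    have e2: "\<forall>\<^sub>F t in at_left r. \<phi> t = G t"
      proof - have "-r < r" using r by simp from eventually_at_left_real[OF this] show ?thesis by (rule eventually_mono) (auto simp: G_def) qed
    show "(G \<longlongrightarrow> G r) (at_left r)"
    proof - have "G r = 0" by (simp add: G_def) thus ?thesis using tendsto_cong[OF e2] lr by simp qed
    show "G \<midarrow>x\<rightarrow> G x" if "-r < x" "x < r" for x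
      using GD[of x] that DERIV_isCont[of G] unfolding isCont_def by auto
  qed (use r in auto)
  have "(\<delta> has_integral G r - G (-r)) {-r..r}"
    by (rule fundamental_theorem_of_calculus_interior)
       (use r cont GD in \<open>auto simp: has_real_derivative_iff_has_vector_derivative\<close>)
  then have "(\<delta> has_integral 0) {-r<..<r}"
    by (simp add: G_def has_integral_Icc_iff_Ioo)
  then show ?thesis
    using has_integral_restrict_UNIV[of "{-r<..<r}" \<delta> 0] by simp
qed


lemma sq_lt: fixes x a :: real assumes "a > 0" shows "\<bar>x\<bar> < a \<longleftrightarrow> x\<^sup>2 < a\<^sup>2"
  by (metis abs_of_pos assms less_eq_real_def power2_abs power2_less_imp_less power2_strict_mono)

lemma ell_open: assumes "a1 > 0" "a2 > 0" shows "open (ellipse a1 a2)"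
  unfolding ellipse_def using assms by (intro open_Collect_less continuous_intros) auto

lemma ell_bounded: assumes "a1 > 0" "a2 > 0" shows "bounded (ellipse a1 a2)"
proof -
  have "ellipse a1 a2 \<subseteq> cball 0 (a1 + a2)"
  proof
    fix y assume "y \<in> ellipse a1 a2"
    then have h: "(fst y)\<^sup>2 / a1\<^sup>2 + (snd y)\<^sup>2 / a2\<^sup>2 < 1" by (simp add: ellipse_def)
    have "(fst y)\<^sup>2 / a1\<^sup>2 \<le> 1" "(snd y)\<^sup>2 / a2\<^sup>2 \<le> 1"
      using h by (smt (verit) divide_nonneg_nonneg zero_le_power2)+
    then have "(fst y)\<^sup>2 \<le> a1\<^sup>2" "(snd y)\<^sup>2 \<le> a2\<^sup>2" using assms by (simp_all add: divide_le_eq)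
    then have "\<bar>fst y\<bar> \<le> a1" "\<bar>snd y\<bar> \<le> a2" using assms
      by (metis abs_le_square_iff abs_of_pos)+
    moreover have "norm y \<le> norm (fst y) + norm (snd y)"
      using norm_Pair_le[of "fst y" "snd y"] by simp
    ultimately have "norm y \<le> a1 + a2" by simp
    then show "y \<in> cball 0 (a1 + a2)" by simp
  qed
  then show ?thesis using bounded_cball bounded_subset by blast
qed

lemma closure_theta: assumes "a1 > 0" "a2 > 0" "z \<in> closure (ellipse a1 a2)" shows "theta a1 a2 z \<ge> 0"
proof -
  have "closure (ellipse a1 a2) \<subseteq> {y. 0 \<le> theta a1 a2 y}"
    by (rule closure_minimal) (use assms in \<open>auto simp: ellipse_def theta_def intro!: closed_Collect_le continuous_intros\<close>)
  then show ?thesis using assms by auto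
qed

lemma frontier_theta: assumes "a1 > 0" "a2 > 0" "z \<in> frontier (ellipse a1 a2)" shows "theta a1 a2 z = 0"
proof -
  have "z \<in> closure (ellipse a1 a2)" "z \<notin> ellipse a1 a2"
    using assms ell_open[OF assms(1,2)] by (auto simp: frontier_def interior_open)
  then show ?thesis using closure_theta[of a1 a2 z] assms by (auto simp: ellipse_def theta_def)
qed

lemma chord1:
  assumes "a1 > 0" "a2 > 0" "\<bar>x\<bar> < a2"
  defines "c \<equiv> a1 * sqrt (1 - x\<^sup>2 / a2\<^sup>2)"
  shows "c > 0" "\<And>t. (t, x) \<in> ellipse a1 a2 \<longleftrightarrow> -c < t \<and> t < c"
proof -
  have q: "x\<^sup>2 < a2\<^sup>2" using sq_lt assms by blast
  then have "x\<^sup>2 / a2\<^sup>2 < 1" using assms by simp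
  then show cp: "c > 0" using assms by (simp add: c_def)
  have c2: "c\<^sup>2 = a1\<^sup>2 * (1 - x\<^sup>2 / a2\<^sup>2)" using q assms by (simp add: c_def power_mult_distrib)
  fix t
  have "(t, x) \<in> ellipse a1 a2 \<longleftrightarrow> t\<^sup>2 / a1\<^sup>2 < 1 - x\<^sup>2 / a2\<^sup>2" by (auto simp: ellipse_def)
  also have "\<dots> \<longleftrightarrow> t\<^sup>2 < c\<^sup>2" using assms c2 by (simp add: divide_less_eq mult.commute)
  also have "\<dots> \<longleftrightarrow> -c < t \<and> t < c" using sq_lt[OF cp, of t] by auto
  finally show "(t, x) \<in> ellipse a1 a2 \<longleftrightarrow> -c < t \<and> t < c" .
qed


lemma inner_lint_zero:
  fixes f :: "real \<Rightarrow> real"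
  assumes "integral UNIV f = 0"
  shows "integral\<^sup>L lborel f = 0"
  using assms integral_lborel not_integrable_integral_eq by metis

lemma fubini_zero1:
  fixes F :: "real \<times> real \<Rightarrow> real"
  assumes int: "integrable lborel F" and inner: "\<And>x. integral UNIV (\<lambda>y. F (y,x)) = 0"
  shows "integral\<^sup>L lborel F = 0"
proof -
  have i2: "integrable (lborel \<Otimes>\<^sub>M lborel) F" using int by (simp add: lborel_prod)
  have m: "F \<in> borel_measurable (lborel \<Otimes>\<^sub>M lborel)" using i2 by simp
  have "integral\<^sup>L lborel F = integral\<^sup>L (lborel \<Otimes>\<^sub>M lborel) F" by (simp add: lborel_prod)
  also have "\<dots> = (\<integral>(x,y). F (y,x) \<partial>(lborel \<Otimes>\<^sub>M lborel))"
    using lborel_pair.integral_product_swap[OF m] by simp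
  also have "\<dots> = (\<integral>x. (\<integral>y. F (y,x) \<partial>lborel) \<partial>lborel)"
    using lborel_pair.integral_fst'[of "\<lambda>(x,y). F(y,x)"] lborel_pair.integrable_product_swap[OF i2] by simp
  also have "\<dots> = 0" using inner_lint_zero[OF inner] by simp
  finally show ?thesis .
qed

lemma fubini_zero2:
  fixes F :: "real \<times> real \<Rightarrow> real"
  assumes int: "integrable lborel F" and inner: "\<And>x. integral UNIV (\<lambda>y. F (x,y)) = 0"
  shows "integral\<^sup>L lborel F = 0"
proof -
  have i2: "integrable (lborel \<Otimes>\<^sub>M lborel) F" using int by (simp add: lborel_prod)
  have "integral\<^sup>L lborel F = integral\<^sup>L (lborel \<Otimes>\<^sub>M lborel) F" by (simp add: lborel_prod)
  also have "\<dots> = (\<integral>x. (\<integral>y. F (x,y) \<partial>lborel) \<partial>lborel)"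
    using lborel_pair.integral_fst'[OF i2] by simp
  also have "\<dots> = 0" using inner_lint_zero[OF inner] by simp
  finally show ?thesis .
qed

lemma good_integrable:
  fixes d :: "real \<times> real \<Rightarrow> real"
  assumes "open S" "bounded S" "continuous_on S d" "\<And>y. y \<in> S \<Longrightarrow> \<bar>d y\<bar> \<le> B"
  shows "integrable lborel (\<lambda>z. indicator S z *\<^sub>R d z)"
proof (rule integrableI_bounded_set[where A=S and B=B])
  show "S \<in> sets lborel" using assms by simp
  show "(\<lambda>z. indicator S z *\<^sub>R d z) \<in> borel_measurable lborel"
    using borel_measurable_continuous_on_indicator[of S d] assms by simp
  show "emeasure lborel S < \<infinity>" using emeasure_bounded_finite assms by blast
  show "AE x in lborel. x \<in> S \<longrightarrow> norm (indicator S x *\<^sub>R d x) \<le> B" using assms by auto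
  show "AE x in lborel. x \<notin> S \<longrightarrow> indicator S x *\<^sub>R d x = 0" by auto
qed

lemma good_integrable_on:
  fixes d :: "real \<times> real \<Rightarrow> real"
  assumes "open S" "bounded S" "continuous_on S d" "\<And>y. y \<in> S \<Longrightarrow> \<bar>d y\<bar> \<le> B"
  shows "d integrable_on S"
proof -
  have "(\<lambda>z. indicator S z *\<^sub>R d z) integrable_on UNIV"
    using integrable_on_lborel[OF good_integrable[OF assms]] .
  moreover have "(\<lambda>z. indicator S z *\<^sub>R d z) = (\<lambda>z. if z \<in> S then d z else 0)"
    by (auto simp: indicator_def)
  ultimately show ?thesis using integrable_restrict_UNIV by metis
qed

lemma integral_as_lint:
  fixes d :: "real \<times> real \<Rightarrow> real"
  assumes "open S" "bounded S" "continuous_on S d" "\<And>y. y \<in> S \<Longrightarrow> \<bar>d y\<bar> \<le> B"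
  shows "integral S d = integral\<^sup>L lborel (\<lambda>z. indicator S z *\<^sub>R d z)"
proof -
  have "(\<lambda>z. indicator S z *\<^sub>R d z) = (\<lambda>z. if z \<in> S then d z else 0)"
    by (auto simp: indicator_def)
  then have "integral S d = integral UNIV (\<lambda>z. indicator S z *\<^sub>R d z)"
    using integral_restrict_UNIV[of S d] by simp
  also have "\<dots> = integral\<^sup>L lborel (\<lambda>z. indicator S z *\<^sub>R d z)"
    using integral_lborel[OF good_integrable[OF assms]] .
  finally show ?thesis .
qed


lemma endpoint_frontier1:
  fixes S :: "(real \<times> real) set"
  assumes "open S" "\<And>t. (t,x) \<in> S \<longleftrightarrow> -c < t \<and> t < c" "c > 0"
  shows "(c,x) \<in> frontier S" "(-c,x) \<in> frontier S"
proof -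
  have "(c,x) \<in> closure S"
    unfolding closure_approachable
  proof (intro allI impI)
    fix e :: real assume "e > 0"
    then show "\<exists>y\<in>S. dist y (c,x) < e"
      by (intro bexI[of _ "(c - min e c / 2, x)"]) (use assms in \<open>auto simp: dist_Pair_Pair dist_real_def\<close>)
  qed
  then show "(c,x) \<in> frontier S" using assms by (auto simp: frontier_def interior_open)
  have "(-c,x) \<in> closure S"
    unfolding closure_approachable
  proof (intro allI impI)
    fix e :: real assume "e > 0"
    then show "\<exists>y\<in>S. dist y (-c,x) < e"
      by (intro bexI[of _ "(-c + min e c / 2, x)"]) (use assms in \<open>auto simp: dist_Pair_Pair dist_real_def\<close>)
  qed
  then show "(-c,x) \<in> frontier S" using assms by (auto simp: frontier_def interior_open)
qed

lemma endpoint_frontier2: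
  fixes S :: "(real \<times> real) set"
  assumes "open S" "\<And>t. (x,t) \<in> S \<longleftrightarrow> -c < t \<and> t < c" "c > 0"
  shows "(x,c) \<in> frontier S" "(x,-c) \<in> frontier S"
proof -
  have "(x,c) \<in> closure S"
    unfolding closure_approachable
  proof (intro allI impI)
    fix e :: real assume "e > 0"
    then show "\<exists>y\<in>S. dist y (x,c) < e"
      by (intro bexI[of _ "(x, c - min e c / 2)"]) (use assms in \<open>auto simp: dist_Pair_Pair dist_real_def\<close>)
  qed
  then show "(x,c) \<in> frontier S" using assms by (auto simp: frontier_def interior_open)
  have "(x,-c) \<in> closure S"
    unfolding closure_approachable
  proof (intro allI impI)
    fix e :: real assume "e > 0"
    then show "\<exists>y\<in>S. dist y (x,-c) < e"
      by (intro bexI[of _ "(x, -c + min e c / 2)"]) (use assms in \<open>auto simp: dist_Pair_Pair dist_real_def\<close>)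
  qed
  then show "(x,-c) \<in> frontier S" using assms by (auto simp: frontier_def interior_open)
qed

lemma lim_ends1:
  fixes S :: "(real \<times> real) set" and g :: "real \<times> real \<Rightarrow> real"
  assumes "\<And>t. (t,x) \<in> S \<longleftrightarrow> -c < t \<and> t < c" "c > 0"
    and l1: "(g \<longlongrightarrow> 0) (at (c,x) within S)" and l2: "(g \<longlongrightarrow> 0) (at (-c,x) within S)"
  shows "((\<lambda>t. g (t,x)) \<longlongrightarrow> 0) (at_left c)" "((\<lambda>t. g (t,x)) \<longlongrightarrow> 0) (at_right (-c))"
proof -
  have "filterlim (\<lambda>t. (t,x)) (at (c,x) within S) (at_left c)"
  proof (rule filterlim_at_withinI)
    show "((\<lambda>t. (t,x)) \<longlongrightarrow> (c,x)) (at_left c)"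
      by (intro tendsto_Pair tendsto_ident_at tendsto_const)
    have "-c < c" using assms by simp
    from eventually_at_left_real[OF this]
    show "\<forall>\<^sub>F t in at_left c. (t,x) \<in> S - {(c,x)}"
      by (rule eventually_mono) (use assms in auto)
  qed
  from filterlim_compose[OF l1 this] show "((\<lambda>t. g (t,x)) \<longlongrightarrow> 0) (at_left c)" .
  have "filterlim (\<lambda>t. (t,x)) (at (-c,x) within S) (at_right (-c))"
  proof (rule filterlim_at_withinI)
    show "((\<lambda>t. (t,x)) \<longlongrightarrow> (-c,x)) (at_right (-c))"
      by (intro tendsto_Pair tendsto_ident_at tendsto_const)
    have "-c < c" using assms by simp
    from eventually_at_right_real[OF this]
    show "\<forall>\<^sub>F t in at_right (-c). (t,x) \<in> S - {(-c,x)}"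
      by (rule eventually_mono) (use assms in auto)
  qed
  from filterlim_compose[OF l2 this] show "((\<lambda>t. g (t,x)) \<longlongrightarrow> 0) (at_right (-c))" .
qed

lemma lim_ends2:
  fixes S :: "(real \<times> real) set" and g :: "real \<times> real \<Rightarrow> real"
  assumes "\<And>t. (x,t) \<in> S \<longleftrightarrow> -c < t \<and> t < c" "c > 0"
    and l1: "(g \<longlongrightarrow> 0) (at (x,c) within S)" and l2: "(g \<longlongrightarrow> 0) (at (x,-c) within S)"
  shows "((\<lambda>t. g (x,t)) \<longlongrightarrow> 0) (at_left c)" "((\<lambda>t. g (x,t)) \<longlongrightarrow> 0) (at_right (-c))"
proof -
  have "filterlim (\<lambda>t. (x,t)) (at (x,c) within S) (at_left c)"
  proof (rule filterlim_at_withinI)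
    show "((\<lambda>t. (x,t)) \<longlongrightarrow> (x,c)) (at_left c)"
      by (intro tendsto_Pair tendsto_ident_at tendsto_const)
    have "-c < c" using assms by simp
    from eventually_at_left_real[OF this]
    show "\<forall>\<^sub>F t in at_left c. (x,t) \<in> S - {(x,c)}"
      by (rule eventually_mono) (use assms in auto)
  qed
  from filterlim_compose[OF l1 this] show "((\<lambda>t. g (x,t)) \<longlongrightarrow> 0) (at_left c)" .
  have "filterlim (\<lambda>t. (x,t)) (at (x,-c) within S) (at_right (-c))"
  proof (rule filterlim_at_withinI)
    show "((\<lambda>t. (x,t)) \<longlongrightarrow> (x,-c)) (at_right (-c))"
      by (intro tendsto_Pair tendsto_ident_at tendsto_const)
    have "-c < c" using assms by simp
    from eventually_at_right_real[OF this]
    show "\<forall>\<^sub>F t in at_right (-c). (x,t) \<in> S - {(x,-c)}"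
      by (rule eventually_mono) (use assms in auto)
  qed
  from filterlim_compose[OF l2 this] show "((\<lambda>t. g (x,t)) \<longlongrightarrow> 0) (at_right (-c))" .
qed

lemma chord2:
  assumes "a1 > 0" "a2 > 0" "\<bar>x\<bar> < a1"
  defines "c \<equiv> a2 * sqrt (1 - x\<^sup>2 / a1\<^sup>2)"
  shows "c > 0" "\<And>t. (x, t) \<in> ellipse a1 a2 \<longleftrightarrow> -c < t \<and> t < c"
proof -
  have q: "x\<^sup>2 < a1\<^sup>2" using sq_lt assms by blast
  then have "x\<^sup>2 / a1\<^sup>2 < 1" using assms by simp
  then show cp: "c > 0" using assms by (simp add: c_def)
  have c2: "c\<^sup>2 = a2\<^sup>2 * (1 - x\<^sup>2 / a1\<^sup>2)" using q assms by (simp add: c_def power_mult_distrib)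
  fix t
  have "(x, t) \<in> ellipse a1 a2 \<longleftrightarrow> t\<^sup>2 / a2\<^sup>2 < 1 - x\<^sup>2 / a1\<^sup>2" by (auto simp: ellipse_def)
  also have "\<dots> \<longleftrightarrow> t\<^sup>2 < c\<^sup>2" using assms c2 by (simp add: divide_less_eq mult.commute)
  also have "\<dots> \<longleftrightarrow> -c < t \<and> t < c" using sq_lt[OF cp, of t] by auto
  finally show "(x, t) \<in> ellipse a1 a2 \<longleftrightarrow> -c < t \<and> t < c" .
qed

lemma out1: assumes "a1 > 0" "a2 > 0" "\<not> \<bar>x\<bar> < a2" shows "(t, x) \<notin> ellipse a1 a2"
proof
  assume "(t, x) \<in> ellipse a1 a2"
  then have "t\<^sup>2 / a1\<^sup>2 + x\<^sup>2 / a2\<^sup>2 < 1" by (simp add: ellipse_def)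
  moreover have "x\<^sup>2 \<ge> a2\<^sup>2" using assms sq_lt[of a2 x] by simp
  then have "x\<^sup>2 / a2\<^sup>2 \<ge> 1" using assms by simp
  moreover have "t\<^sup>2 / a1\<^sup>2 \<ge> 0" by simp
  ultimately show False by linarith
qed

lemma out2: assumes "a1 > 0" "a2 > 0" "\<not> \<bar>x\<bar> < a1" shows "(x, t) \<notin> ellipse a1 a2"
proof
  assume "(x, t) \<in> ellipse a1 a2"
  then have "x\<^sup>2 / a1\<^sup>2 + t\<^sup>2 / a2\<^sup>2 < 1" by (simp add: ellipse_def)
  moreover have "x\<^sup>2 \<ge> a1\<^sup>2" using assms sq_lt[of a1 x] by simp
  then have "x\<^sup>2 / a1\<^sup>2 \<ge> 1" using assms by simp
  moreover have "t\<^sup>2 / a2\<^sup>2 \<ge> 0" by simp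
  ultimately show False by linarith
qed

lemma chord_int1:
  fixes d g :: "real \<times> real \<Rightarrow> real"
  assumes a: "a1 > 0" "a2 > 0"
    and dc: "continuous_on (ellipse a1 a2) d" and db: "\<And>y. y \<in> ellipse a1 a2 \<Longrightarrow> \<bar>d y\<bar> \<le> B"
    and der: "\<And>y. y \<in> ellipse a1 a2 \<Longrightarrow> ((\<lambda>t. g (t, snd y)) has_real_derivative d y) (at (fst y))"
    and bd: "\<And>z. z \<in> frontier (ellipse a1 a2) \<Longrightarrow> (g \<longlongrightarrow> 0) (at z within ellipse a1 a2)"
  shows "integral (ellipse a1 a2) d = 0"
proof -
  let ?S = "ellipse a1 a2"
  let ?F = "\<lambda>z. indicator ?S z *\<^sub>R d z"
  have o: "open ?S" and b: "bounded ?S" using ell_open ell_bounded a by auto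
  have "integral ?S d = integral\<^sup>L lborel ?F" by (rule integral_as_lint[OF o b dc db])
  also have "\<dots> = 0"
  proof (rule fubini_zero1[OF good_integrable[OF o b dc db]])
    fix x
    show "integral UNIV (\<lambda>y. ?F (y,x)) = 0"
    proof (cases "\<bar>x\<bar> < a2")
      case True
      define c where "c = a1 * sqrt (1 - x\<^sup>2 / a2\<^sup>2)"
      have cp: "c > 0" and mem: "\<And>t. (t, x) \<in> ?S \<longleftrightarrow> -c < t \<and> t < c"
        using chord1[OF a True] by (auto simp: c_def)
      have fr: "(c,x) \<in> frontier ?S" "(-c,x) \<in> frontier ?S"
        using endpoint_frontier1[OF o mem cp] by auto
      have eq: "(\<lambda>y. ?F (y,x)) = (\<lambda>t. if t \<in> {-c<..<c} then d (t,x) else 0)"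
        by (auto simp: indicator_def mem)
      have "((\<lambda>t. if t \<in> {-c<..<c} then d (t,x) else 0) has_integral 0) UNIV"
      proof (rule inner1d[OF cp])
        show "((\<lambda>t. g (t,x)) has_real_derivative d (t,x)) (at t)" if "t \<in> {-c<..<c}" for t
          using der[of "(t,x)"] that mem by auto
        show "((\<lambda>t. g (t,x)) \<longlongrightarrow> 0) (at_left c)" "((\<lambda>t. g (t,x)) \<longlongrightarrow> 0) (at_right (-c))"
          using lim_ends1[OF mem cp bd[OF fr(1)] bd[OF fr(2)]] by auto
      qed
      then show ?thesis using eq integral_unique by metis
    next
      case False
      then have "(\<lambda>y. ?F (y,x)) = (\<lambda>_. 0)" using out1[OF a False] by (auto simp: indicator_def)
      then show ?thesis by simp
    qed
  qed
  finally show ?thesis .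
qed

lemma chord_int2:
  fixes d g :: "real \<times> real \<Rightarrow> real"
  assumes a: "a1 > 0" "a2 > 0"
    and dc: "continuous_on (ellipse a1 a2) d" and db: "\<And>y. y \<in> ellipse a1 a2 \<Longrightarrow> \<bar>d y\<bar> \<le> B"
    and der: "\<And>y. y \<in> ellipse a1 a2 \<Longrightarrow> ((\<lambda>t. g (fst y, t)) has_real_derivative d y) (at (snd y))"
    and bd: "\<And>z. z \<in> frontier (ellipse a1 a2) \<Longrightarrow> (g \<longlongrightarrow> 0) (at z within ellipse a1 a2)"
  shows "integral (ellipse a1 a2) d = 0"
proof -
  let ?S = "ellipse a1 a2"
  let ?F = "\<lambda>z. indicator ?S z *\<^sub>R d z"
  have o: "open ?S" and b: "bounded ?S" using ell_open ell_bounded a by auto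
  have "integral ?S d = integral\<^sup>L lborel ?F" by (rule integral_as_lint[OF o b dc db])
  also have "\<dots> = 0"
  proof (rule fubini_zero2[OF good_integrable[OF o b dc db]])
    fix x
    show "integral UNIV (\<lambda>y. ?F (x,y)) = 0"
    proof (cases "\<bar>x\<bar> < a1")
      case True
      define c where "c = a2 * sqrt (1 - x\<^sup>2 / a1\<^sup>2)"
      have cp: "c > 0" and mem: "\<And>t. (x, t) \<in> ?S \<longleftrightarrow> -c < t \<and> t < c"
        using chord2[OF a True] by (auto simp: c_def)
      have fr: "(x,c) \<in> frontier ?S" "(x,-c) \<in> frontier ?S"
        using endpoint_frontier2[OF o mem cp] by auto
      have eq: "(\<lambda>y. ?F (x,y)) = (\<lambda>t. if t \<in> {-c<..<c} then d (x,t) else 0)"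
        by (auto simp: indicator_def mem)
      have "((\<lambda>t. if t \<in> {-c<..<c} then d (x,t) else 0) has_integral 0) UNIV"
      proof (rule inner1d[OF cp])
        show "((\<lambda>t. g (x,t)) has_real_derivative d (x,t)) (at t)" if "t \<in> {-c<..<c}" for t
          using der[of "(x,t)"] that mem by auto
        show "((\<lambda>t. g (x,t)) \<longlongrightarrow> 0) (at_left c)" "((\<lambda>t. g (x,t)) \<longlongrightarrow> 0) (at_right (-c))"
          using lim_ends2[OF mem cp bd[OF fr(1)] bd[OF fr(2)]] by auto
      qed
      then show ?thesis using eq integral_unique by metis
    next
      case False
      then have "(\<lambda>y. ?F (x,y)) = (\<lambda>_. 0)" using out2[OF a False] by (auto simp: indicator_def)
      then show ?thesis by simp
    qed
  qed
  finally show ?thesis .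
qed


definition good :: "(real \<times> real) set \<Rightarrow> (real \<times> real \<Rightarrow> real) \<Rightarrow> bool" where
  "good S f \<longleftrightarrow> continuous_on S f \<and> (\<exists>B. \<forall>y\<in>S. \<bar>f y\<bar> \<le> B)"

lemma good_add: "good S f \<Longrightarrow> good S g \<Longrightarrow> good S (\<lambda>y. f y + g y)"
  unfolding good_def
proof (elim conjE exE, intro conjI continuous_intros, assumption+)
  fix B C assume "\<forall>y\<in>S. \<bar>f y\<bar> \<le> B" "\<forall>y\<in>S. \<bar>g y\<bar> \<le> C"
  then show "\<exists>B. \<forall>y\<in>S. \<bar>f y + g y\<bar> \<le> B" by (intro exI[of _ "B + C"]) force
qed

lemma good_diff: "good S f \<Longrightarrow> good S g \<Longrightarrow> good S (\<lambda>y. f y - g y)"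
  unfolding good_def
proof (elim conjE exE, intro conjI continuous_intros, assumption+)
  fix B C assume "\<forall>y\<in>S. \<bar>f y\<bar> \<le> B" "\<forall>y\<in>S. \<bar>g y\<bar> \<le> C"
  then show "\<exists>B. \<forall>y\<in>S. \<bar>f y - g y\<bar> \<le> B" by (intro exI[of _ "B + C"]) force
qed

lemma good_mult: "good S f \<Longrightarrow> good S g \<Longrightarrow> good S (\<lambda>y. f y * g y)"
  unfolding good_def
proof (elim conjE exE, intro conjI continuous_intros, assumption+)
  fix B C assume b: "\<forall>y\<in>S. \<bar>f y\<bar> \<le> B" "\<forall>y\<in>S. \<bar>g y\<bar> \<le> C"
  show "\<exists>B. \<forall>y\<in>S. \<bar>f y * g y\<bar> \<le> B"
  proof (intro exI[of _ "B * C"] ballI)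
    fix y assume "y \<in> S"
    then show "\<bar>f y * g y\<bar> \<le> B * C" using b abs_mult mult_mono' by (metis abs_ge_zero)
  qed
qed

lemma good_const: "good S (\<lambda>y. c)"
  unfolding good_def by auto

lemma good_cong: "good S f \<Longrightarrow> (\<And>y. y \<in> S \<Longrightarrow> f y = g y) \<Longrightarrow> good S g"
  unfolding good_def by (metis continuous_on_cong)

lemma good_closure: assumes "bounded S" "continuous_on (closure S) f" shows "good S f"
proof -
  have "compact (f ` closure S)" using assms compact_closure compact_continuous_image by blast
  then obtain B where "\<forall>x\<in>f ` closure S. \<bar>x\<bar> \<le> B" using compact_imp_bounded bounded_real by blast
  then have "\<forall>y\<in>S. \<bar>f y\<bar> \<le> B" using closure_subset by blast
  moreover have "continuous_on S f" using assms continuous_on_subset closure_subset by blast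
  ultimately show ?thesis unfolding good_def by blast
qed

lemma good_uc: assumes "bounded S" "uniformly_continuous_on S f" shows "good S f"
proof -
  have "bounded (f ` S)" using bounded_uniformly_continuous_image assms by blast
  then obtain B where "\<forall>x\<in>f ` S. \<bar>x\<bar> \<le> B" using bounded_real by blast
  then show ?thesis unfolding good_def using uniformly_continuous_imp_continuous assms by blast
qed

lemma good_poly: assumes "continuous_on UNIV f" "bounded S" shows "good S f"
  using good_closure[OF assms(2)] continuous_on_subset[OF assms(1)] by blast

lemma good_int: assumes "good (ellipse a1 a2) f" "a1 > 0" "a2 > 0" shows "f integrable_on ellipse a1 a2"
  using assms good_integrable_on[OF ell_open ell_bounded] unfolding good_def by metis

lemma chord_good1:
  fixes d g :: "real \<times> real \<Rightarrow> real"
  assumes a: "a1 > 0" "a2 > 0" and "good (ellipse a1 a2) d"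
    and der: "\<And>y. y \<in> ellipse a1 a2 \<Longrightarrow> ((\<lambda>t. g (t, snd y)) has_real_derivative d y) (at (fst y))"
    and bd: "\<And>z. z \<in> frontier (ellipse a1 a2) \<Longrightarrow> (g \<longlongrightarrow> 0) (at z within ellipse a1 a2)"
  shows "integral (ellipse a1 a2) d = 0"
  using assms chord_int1[OF a, of d _ g] unfolding good_def by metis

lemma chord_good2:
  fixes d g :: "real \<times> real \<Rightarrow> real"
  assumes a: "a1 > 0" "a2 > 0" and "good (ellipse a1 a2) d"
    and der: "\<And>y. y \<in> ellipse a1 a2 \<Longrightarrow> ((\<lambda>t. g (fst y, t)) has_real_derivative d y) (at (snd y))"
    and bd: "\<And>z. z \<in> frontier (ellipse a1 a2) \<Longrightarrow> (g \<longlongrightarrow> 0) (at z within ellipse a1 a2)"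
  shows "integral (ellipse a1 a2) d = 0"
  using assms chord_int2[OF a, of d _ g] unfolding good_def by metis

lemma L1: assumes "f differentiable (at y)"
  shows "((\<lambda>t. f (t, snd y)) has_real_derivative pd1 f y) (at (fst y))"
proof -
  have "(\<lambda>t. (t, snd y)) differentiable (at (fst y))"
    by (intro derivative_intros)
  then have "(f \<circ> (\<lambda>t. (t, snd y))) differentiable (at (fst y))"
    using assms by (intro differentiable_chain_at) auto
  then show ?thesis unfolding pd1_def
    using DERIV_deriv_iff_real_differentiable by (simp add: o_def)
qed

lemma L2: assumes "f differentiable (at y)"
  shows "((\<lambda>t. f (fst y, t)) has_real_derivative pd2 f y) (at (snd y))"
proof -
  have "(\<lambda>t. (fst y, t)) differentiable (at (snd y))"
    by (intro derivative_intros)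
  then have "(f \<circ> (\<lambda>t. (fst y, t))) differentiable (at (snd y))"
    using assms by (intro differentiable_chain_at) auto
  then show ?thesis unfolding pd2_def
    using DERIV_deriv_iff_real_differentiable by (simp add: o_def)
qed

lemma tend_bdd:
  fixes f b :: "real \<times> real \<Rightarrow> real"
  assumes "(f \<longlongrightarrow> 0) (at z within S)" "\<And>y. y \<in> S \<Longrightarrow> \<bar>b y\<bar> \<le> B"
  shows "((\<lambda>y. f y * b y) \<longlongrightarrow> 0) (at z within S)"
proof (rule tendsto_0_le[OF assms(1), where K=B])
  show "\<forall>\<^sub>F x in at z within S. norm (f x * b x) \<le> norm (f x) * B"
    unfolding eventually_at_filter
    by (rule always_eventually) (auto simp: abs_mult assms(2) mult_left_mono)
qed

lemma tend_closure:
  assumes "continuous_on (closure S) f" "z \<in> frontier S"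
  shows "(f \<longlongrightarrow> f z) (at z within S)"
proof -
  have "z \<in> closure S" using assms frontier_def by auto
  then have "(f \<longlongrightarrow> f z) (at z within closure S)" using assms continuous_on_def by blast
  then show ?thesis using tendsto_within_subset closure_subset by blast
qed



definition kk :: "real \<Rightarrow> real \<Rightarrow> real" where "kk a1 a2 = 2 * (1 / a1\<^sup>2 + 1 / a2\<^sup>2)"
definition ww :: "real \<Rightarrow> real \<Rightarrow> real \<times> real \<Rightarrow> real" where "ww a1 a2 y = theta a1 a2 y / kk a1 a2"
definition q1 :: "real \<Rightarrow> real \<Rightarrow> real \<times> real \<Rightarrow> real" where "q1 a1 a2 y = -2 * fst y / (a1\<^sup>2 * kk a1 a2)"
definition q2 :: "real \<Rightarrow> real \<Rightarrow> real \<times> real \<Rightarrow> real" where "q2 a1 a2 y = -2 * snd y / (a2\<^sup>2 * kk a1 a2)"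

lemma kk_pos: "a1 > 0 \<Longrightarrow> a2 > 0 \<Longrightarrow> kk a1 a2 > 0" by (simp add: kk_def add_pos_pos)

lemma ww_d1: assumes "a1 > 0" "a2 > 0"
  shows "((\<lambda>t. ww a1 a2 (t, snd y)) has_real_derivative q1 a1 a2 y) (at (fst y))"
  unfolding ww_def theta_def q1_def using assms kk_pos[OF assms]
  by (auto intro!: derivative_eq_intros simp: field_simps)

lemma ww_d2: assumes "a1 > 0" "a2 > 0"
  shows "((\<lambda>t. ww a1 a2 (fst y, t)) has_real_derivative q2 a1 a2 y) (at (snd y))"
  unfolding ww_def theta_def q2_def using assms kk_pos[OF assms]
  by (auto intro!: derivative_eq_intros simp: field_simps)

lemma q1_d1: assumes "a1 > 0" "a2 > 0"
  shows "((\<lambda>t. q1 a1 a2 (t, snd y)) has_real_derivative -2 / (a1\<^sup>2 * kk a1 a2)) (at (fst y))"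
  unfolding q1_def using assms kk_pos[OF assms]
  by (auto intro!: derivative_eq_intros simp: field_simps)

lemma q2_d2: assumes "a1 > 0" "a2 > 0"
  shows "((\<lambda>t. q2 a1 a2 (fst y, t)) has_real_derivative -2 / (a2\<^sup>2 * kk a1 a2)) (at (snd y))"
  unfolding q2_def using assms kk_pos[OF assms]
  by (auto intro!: derivative_eq_intros simp: field_simps)

lemma qq: assumes "(X::real)>0" "Y>0" shows "-2/(X*(2*(1/X+1/Y))) + -2/(Y*(2*(1/X+1/Y))) = -1"
proof -
  define u where "u = 1/X+1/Y"
  have u: "u > 0" using assms by (simp add: u_def add_pos_pos)
  have "-2/(X*(2*u)) = -(1/X)/u" "-2/(Y*(2*u)) = -(1/Y)/u" using assms u by (simp_all add: field_simps)
  moreover have "-(1/X)/u + -(1/Y)/u = -((1/X + 1/Y)/u)" by (metis add_divide_distrib minus_add_distrib minus_divide_left)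
  moreover have "(1/X + 1/Y)/u = 1" using u unfolding u_def[symmetric] by simp
  ultimately show ?thesis by (simp add: u_def)
qed

lemma qsum: assumes "a1 > 0" "a2 > 0"
  shows "-2 / (a1\<^sup>2 * kk a1 a2) + -2 / (a2\<^sup>2 * kk a1 a2) = -1"
  unfolding kk_def using qq[of "a1\<^sup>2" "a2\<^sup>2"] assms by simp

lemma ww_cont: assumes "a1 > 0" "a2 > 0" shows "continuous_on UNIV (ww a1 a2)"
  using assms kk_pos[OF assms] unfolding ww_def theta_def by (intro continuous_intros) auto
lemma q1_cont: assumes "a1 > 0" "a2 > 0" shows "continuous_on UNIV (q1 a1 a2)"
  using assms kk_pos[OF assms] unfolding q1_def by (intro continuous_intros) auto
lemma q2_cont: assumes "a1 > 0" "a2 > 0" shows "continuous_on UNIV (q2 a1 a2)"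
  using assms kk_pos[OF assms] unfolding q2_def by (intro continuous_intros) auto

lemma ww_frontier: "a1 > 0 \<Longrightarrow> a2 > 0 \<Longrightarrow> z \<in> frontier (ellipse a1 a2) \<Longrightarrow> ww a1 a2 z = 0"
  using frontier_theta by (simp add: ww_def)

lemma ww_tend: assumes "a1 > 0" "a2 > 0" "z \<in> frontier (ellipse a1 a2)"
  shows "(ww a1 a2 \<longlongrightarrow> 0) (at z within ellipse a1 a2)"
proof -
  have "(ww a1 a2 \<longlongrightarrow> ww a1 a2 z) (at z within ellipse a1 a2)"
    using ww_cont[OF assms(1,2)] continuous_on_def by (metis UNIV_I continuous_on_subset subset_UNIV tendsto_within_subset)
  then show ?thesis using ww_frontier[OF assms] by simp
qed

lemma p_part:
  fixes p :: "real \<times> real \<Rightarrow> real"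
  assumes a: "a1 > 0" "a2 > 0" and C2: "C2_closure (ellipse a1 a2) p"
    and bnd: "\<forall>y \<in> frontier (ellipse a1 a2). p y = 0"
  shows "integral (ellipse a1 a2) p = - integral (ellipse a1 a2) (\<lambda>y. ww a1 a2 y * laplacian p y)"
    "good (ellipse a1 a2) (\<lambda>y. ww a1 a2 y * laplacian p y)"
proof -
  let ?S = "ellipse a1 a2"
  have o: "open ?S" and b: "bounded ?S" using ell_open ell_bounded a by auto
  have cp: "continuous_on (closure ?S) p" and dp: "p differentiable_on ?S"
    and uc1: "uniformly_continuous_on ?S (pd1 p)" and uc2: "uniformly_continuous_on ?S (pd2 p)"
    and d1p: "pd1 p differentiable_on ?S" and d2p: "pd2 p differentiable_on ?S"
    and uc11: "uniformly_continuous_on ?S (pd1 (pd1 p))" and uc22: "uniformly_continuous_on ?S (pd2 (pd2 p))"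
    using C2 unfolding C2_closure_def C1_closure_def by auto
  have gp: "good ?S p" using good_closure[OF b cp] .
  have gw: "good ?S (ww a1 a2)" using good_poly[OF ww_cont[OF a] b] .
  have g11: "good ?S (pd1 (pd1 p))" using good_uc[OF b uc11] .
  have g22: "good ?S (pd2 (pd2 p))" using good_uc[OF b uc22] .
  obtain B1 where B1: "\<And>y. y \<in> ?S \<Longrightarrow> \<bar>pd1 p y\<bar> \<le> B1" using good_uc[OF b uc1] unfolding good_def by blast
  obtain B2 where B2: "\<And>y. y \<in> ?S \<Longrightarrow> \<bar>pd2 p y\<bar> \<le> B2" using good_uc[OF b uc2] unfolding good_def by blast
  have dpa: "p differentiable (at y)" "pd1 p differentiable (at y)" "pd2 p differentiable (at y)" if "y \<in> ?S" for y
    using dp d1p d2p o that differentiable_on_eq_differentiable_at by blast+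
  have ptend: "(p \<longlongrightarrow> 0) (at z within ?S)" if "z \<in> frontier ?S" for z
    using tend_closure[OF cp that] bnd that by simp
  define d1 where "d1 y = p y * (-2 / (a1\<^sup>2 * kk a1 a2)) - ww a1 a2 y * pd1 (pd1 p) y" for y
  define d2 where "d2 y = p y * (-2 / (a2\<^sup>2 * kk a1 a2)) - ww a1 a2 y * pd2 (pd2 p) y" for y
  have gd1: "good ?S d1" unfolding d1_def by (intro good_diff good_mult gp gw g11 good_const)
  have gd2: "good ?S d2" unfolding d2_def by (intro good_diff good_mult gp gw g22 good_const)
  have I1: "integral ?S d1 = 0"
  proof (rule chord_good1[OF a gd1, where g = "\<lambda>y. p y * q1 a1 a2 y - ww a1 a2 y * pd1 p y"])
    fix y assume y: "y \<in> ?S"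
    have "((\<lambda>t. p (t, snd y) * q1 a1 a2 (t, snd y) - ww a1 a2 (t, snd y) * pd1 p (t, snd y))
      has_real_derivative (pd1 p y * q1 a1 a2 (fst y, snd y) + (-2 / (a1\<^sup>2 * kk a1 a2)) * p (fst y, snd y)
         - (q1 a1 a2 y * pd1 p (fst y, snd y) + pd1 (pd1 p) y * ww a1 a2 (fst y, snd y)))) (at (fst y))"
      by (intro DERIV_diff DERIV_mult L1 dpa y ww_d1 q1_d1 a)
    then show "((\<lambda>t. p (t, snd y) * q1 a1 a2 (t, snd y) - ww a1 a2 (t, snd y) * pd1 p (t, snd y))
      has_real_derivative d1 y) (at (fst y))"
      by (rule DERIV_cong) (simp add: d1_def algebra_simps)
  next
    fix z assume z: "z \<in> frontier ?S"
    have "((\<lambda>y. p y * q1 a1 a2 y) \<longlongrightarrow> 0 * q1 a1 a2 z) (at z within ?S)"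
      by (intro tendsto_mult ptend z) (metis UNIV_I continuous_on_def q1_cont[OF a] tendsto_within_subset subset_UNIV)
    moreover have "((\<lambda>y. ww a1 a2 y * pd1 p y) \<longlongrightarrow> 0) (at z within ?S)"
      by (rule tend_bdd[OF ww_tend[OF a z] B1])
    ultimately show "((\<lambda>y. p y * q1 a1 a2 y - ww a1 a2 y * pd1 p y) \<longlongrightarrow> 0) (at z within ?S)"
      using tendsto_diff by fastforce
  qed
  have I2: "integral ?S d2 = 0"
  proof (rule chord_good2[OF a gd2, where g = "\<lambda>y. p y * q2 a1 a2 y - ww a1 a2 y * pd2 p y"])
    fix y assume y: "y \<in> ?S"
    have "((\<lambda>t. p (fst y, t) * q2 a1 a2 (fst y, t) - ww a1 a2 (fst y, t) * pd2 p (fst y, t))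
      has_real_derivative (pd2 p y * q2 a1 a2 (fst y, snd y) + (-2 / (a2\<^sup>2 * kk a1 a2)) * p (fst y, snd y)
         - (q2 a1 a2 y * pd2 p (fst y, snd y) + pd2 (pd2 p) y * ww a1 a2 (fst y, snd y)))) (at (snd y))"
      by (intro DERIV_diff DERIV_mult L2 dpa y ww_d2 q2_d2 a)
    then show "((\<lambda>t. p (fst y, t) * q2 a1 a2 (fst y, t) - ww a1 a2 (fst y, t) * pd2 p (fst y, t))
      has_real_derivative d2 y) (at (snd y))"
      by (rule DERIV_cong) (simp add: d2_def algebra_simps)
  next
    fix z assume z: "z \<in> frontier ?S"
    have "((\<lambda>y. p y * q2 a1 a2 y) \<longlongrightarrow> 0 * q2 a1 a2 z) (at z within ?S)"
      by (intro tendsto_mult ptend z) (metis UNIV_I continuous_on_def q2_cont[OF a] tendsto_within_subset subset_UNIV)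
    moreover have "((\<lambda>y. ww a1 a2 y * pd2 p y) \<longlongrightarrow> 0) (at z within ?S)"
      by (rule tend_bdd[OF ww_tend[OF a z] B2])
    ultimately show "((\<lambda>y. p y * q2 a1 a2 y - ww a1 a2 y * pd2 p y) \<longlongrightarrow> 0) (at z within ?S)"
      using tendsto_diff by fastforce
  qed
  have gl: "good ?S (\<lambda>y. ww a1 a2 y * laplacian p y)"
    unfolding laplacian_def by (intro good_mult good_add gw g11 g22)
  then show "good ?S (\<lambda>y. ww a1 a2 y * laplacian p y)" .
  have "0 = integral ?S (\<lambda>y. d1 y + d2 y)"
    using I1 I2 integral_add[OF good_int[OF gd1 a] good_int[OF gd2 a]] by simp
  also have "(\<lambda>y. d1 y + d2 y) = (\<lambda>y. - p y - ww a1 a2 y * laplacian p y)"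
  proof
    fix y
    have "d1 y + d2 y = p y * (-2 / (a1\<^sup>2 * kk a1 a2) + -2 / (a2\<^sup>2 * kk a1 a2)) - ww a1 a2 y * laplacian p y"
      by (simp add: d1_def d2_def laplacian_def algebra_simps)
    then show "d1 y + d2 y = - p y - ww a1 a2 y * laplacian p y" using qsum[OF a] by simp
  qed
  also have "integral ?S (\<lambda>y. - p y - ww a1 a2 y * laplacian p y)
      = - integral ?S p - integral ?S (\<lambda>y. ww a1 a2 y * laplacian p y)"
    using integral_diff[of "\<lambda>y. - p y" ?S, OF _ good_int[OF gl a]] good_int[OF gp a]
    by (simp add: integrable_neg)
  finally show "integral ?S p = - integral ?S (\<lambda>y. ww a1 a2 y * laplacian p y)" by simp
qed



definition P1 :: "real \<Rightarrow> real \<Rightarrow> real \<Rightarrow> real \<times> real \<Rightarrow> real" where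
  "P1 p0 a1 a2 y = p0 * (2 * theta a1 a2 y) * (-2 * fst y / a1\<^sup>2)"
definition P2 :: "real \<Rightarrow> real \<Rightarrow> real \<Rightarrow> real \<times> real \<Rightarrow> real" where
  "P2 p0 a1 a2 y = p0 * (2 * theta a1 a2 y) * (-2 * snd y / a2\<^sup>2)"
definition P11 :: "real \<Rightarrow> real \<Rightarrow> real \<Rightarrow> real \<times> real \<Rightarrow> real" where
  "P11 p0 a1 a2 y = p0 * 2 * ((-2 * fst y / a1\<^sup>2) * (-2 * fst y / a1\<^sup>2) + theta a1 a2 y * (-2 / a1\<^sup>2))"
definition P22 :: "real \<Rightarrow> real \<Rightarrow> real \<Rightarrow> real \<times> real \<Rightarrow> real" where
  "P22 p0 a1 a2 y = p0 * 2 * ((-2 * snd y / a2\<^sup>2) * (-2 * snd y / a2\<^sup>2) + theta a1 a2 y * (-2 / a2\<^sup>2))"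

lemma pbar_d1: assumes "a1 > 0" "a2 > 0"
  shows "((\<lambda>t. pbar p0 a1 a2 (t, snd y)) has_real_derivative P1 p0 a1 a2 y) (at (fst y))"
  unfolding pbar_def P1_def theta_def using assms
  by (auto intro!: derivative_eq_intros simp: field_simps; algebra)

lemma pbar_d2: assumes "a1 > 0" "a2 > 0"
  shows "((\<lambda>t. pbar p0 a1 a2 (fst y, t)) has_real_derivative P2 p0 a1 a2 y) (at (snd y))"
  unfolding pbar_def P2_def theta_def using assms
  by (auto intro!: derivative_eq_intros simp: field_simps; algebra)

lemma P1_d1: assumes "a1 > 0" "a2 > 0"
  shows "((\<lambda>t. P1 p0 a1 a2 (t, snd y)) has_real_derivative P11 p0 a1 a2 y) (at (fst y))"
  unfolding P11_def P1_def theta_def using assms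
  by (auto intro!: derivative_eq_intros simp: field_simps; algebra)

lemma P2_d2: assumes "a1 > 0" "a2 > 0"
  shows "((\<lambda>t. P2 p0 a1 a2 (fst y, t)) has_real_derivative P22 p0 a1 a2 y) (at (snd y))"
  unfolding P22_def P2_def theta_def using assms
  by (auto intro!: derivative_eq_intros simp: field_simps; algebra)

lemma pd1_pbar: assumes "a1 > 0" "a2 > 0" shows "pd1 (pbar p0 a1 a2) y = P1 p0 a1 a2 y"
  unfolding pd1_def using DERIV_imp_deriv[OF pbar_d1[OF assms]] .

lemma pd2_pbar: assumes "a1 > 0" "a2 > 0" shows "pd2 (pbar p0 a1 a2) y = P2 p0 a1 a2 y"
  unfolding pd2_def using DERIV_imp_deriv[OF pbar_d2[OF assms]] .

lemma P_cont: assumes "a1 > 0" "a2 > 0"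
  shows "continuous_on UNIV (P1 p0 a1 a2)" "continuous_on UNIV (P2 p0 a1 a2)"
    "continuous_on UNIV (P11 p0 a1 a2)" "continuous_on UNIV (P22 p0 a1 a2)"
    "continuous_on UNIV (rho a1 a2)"
  unfolding P1_def P2_def P11_def P22_def theta_def rho_def Let_def using assms
  by (intro continuous_intros; auto)+

lemma rho_id: assumes "a1 > 0" "a2 > 0"
  shows "q1 a1 a2 y * P1 p0 a1 a2 y + q2 a1 a2 y * P2 p0 a1 a2 y = 8 * p0 / (kk a1 a2 * a1 * a2) * rho a1 a2 y"
  unfolding q1_def q2_def P1_def P2_def rho_def Let_def using assms kk_pos[OF assms]
  by (simp add: field_simps power2_eq_square)



lemma H_part:
  fixes H :: "real \<times> real \<Rightarrow> real"
  assumes a: "a1 > 0" "a2 > 0" and C1: "C1_closure (ellipse a1 a2) H"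
  shows "integral (ellipse a1 a2) (\<lambda>y. ww a1 a2 y * div_H_grad H (pbar p0 a1 a2) y)
       = - (8 * p0 / (kk a1 a2 * a1 * a2)) * integral (ellipse a1 a2) (\<lambda>y. H y * rho a1 a2 y)"
    "good (ellipse a1 a2) (\<lambda>y. ww a1 a2 y * div_H_grad H (pbar p0 a1 a2) y)"
    "good (ellipse a1 a2) (\<lambda>y. H y * rho a1 a2 y)"
proof -
  let ?S = "ellipse a1 a2"
  let ?K = "8 * p0 / (kk a1 a2 * a1 * a2)"
  have o: "open ?S" and b: "bounded ?S" using ell_open ell_bounded a by auto
  have cH: "continuous_on (closure ?S) H" and dH: "H differentiable_on ?S"
    and uc1: "uniformly_continuous_on ?S (pd1 H)" and uc2: "uniformly_continuous_on ?S (pd2 H)"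
    using C1 unfolding C1_closure_def by auto
  have gH: "good ?S H" using good_closure[OF b cH] .
  have gH1: "good ?S (pd1 H)" using good_uc[OF b uc1] .
  have gH2: "good ?S (pd2 H)" using good_uc[OF b uc2] .
  have gw: "good ?S (ww a1 a2)" using good_poly[OF ww_cont[OF a] b] .
  have gq1: "good ?S (q1 a1 a2)" using good_poly[OF q1_cont[OF a] b] .
  have gq2: "good ?S (q2 a1 a2)" using good_poly[OF q2_cont[OF a] b] .
  have gP: "good ?S (P1 p0 a1 a2)" "good ?S (P2 p0 a1 a2)" "good ?S (P11 p0 a1 a2)" "good ?S (P22 p0 a1 a2)"
    "good ?S (rho a1 a2)"
    using good_poly[OF P_cont(1)[OF a] b] good_poly[OF P_cont(2)[OF a] b]
      good_poly[OF P_cont(3)[OF a] b] good_poly[OF P_cont(4)[OF a] b] good_poly[OF P_cont(5)[OF a] b] by auto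
  have dHa: "H differentiable (at y)" if "y \<in> ?S" for y
    using dH o that differentiable_on_eq_differentiable_at by blast
  define E1 where "E1 y = pd1 H y * P1 p0 a1 a2 y + P11 p0 a1 a2 y * H y" for y
  define E2 where "E2 y = pd2 H y * P2 p0 a1 a2 y + P22 p0 a1 a2 y * H y" for y
  have gE1: "good ?S E1" unfolding E1_def by (intro good_add good_mult gH gH1 gP)
  have gE2: "good ?S E2" unfolding E2_def by (intro good_add good_mult gH gH2 gP)
  have DH1: "((\<lambda>t. H (t, snd y) * P1 p0 a1 a2 (t, snd y)) has_real_derivative E1 y) (at (fst y))"
    if "y \<in> ?S" for y
    by (rule DERIV_cong[OF DERIV_mult[OF L1[OF dHa[OF that]] P1_d1[OF a]]]) (simp add: E1_def)
  have DH2: "((\<lambda>t. H (fst y, t) * P2 p0 a1 a2 (fst y, t)) has_real_derivative E2 y) (at (snd y))"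
    if "y \<in> ?S" for y
    by (rule DERIV_cong[OF DERIV_mult[OF L2[OF dHa[OF that]] P2_d2[OF a]]]) (simp add: E2_def)
  have divE: "div_H_grad H (pbar p0 a1 a2) y = E1 y + E2 y" if "y \<in> ?S" for y
  proof -
    have f1: "(\<lambda>z. H z * pd1 (pbar p0 a1 a2) z) = (\<lambda>z. H z * P1 p0 a1 a2 z)"
      using pd1_pbar[OF a] by simp
    have f2: "(\<lambda>z. H z * pd2 (pbar p0 a1 a2) z) = (\<lambda>z. H z * P2 p0 a1 a2 z)"
      using pd2_pbar[OF a] by simp
    show ?thesis unfolding div_H_grad_def f1 f2 unfolding pd1_def pd2_def
      using DERIV_imp_deriv[OF DH1[OF that]] DERIV_imp_deriv[OF DH2[OF that]] by simp
  qed
  define e1 where "e1 y = q1 a1 a2 y * (H y * P1 p0 a1 a2 y) + E1 y * ww a1 a2 y" for y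
  define e2 where "e2 y = q2 a1 a2 y * (H y * P2 p0 a1 a2 y) + E2 y * ww a1 a2 y" for y
  have ge1: "good ?S e1" unfolding e1_def by (intro good_add good_mult gH gq1 gw gE1 gP)
  have ge2: "good ?S e2" unfolding e2_def by (intro good_add good_mult gH gq2 gw gE2 gP)
  have tHP: "((\<lambda>y. ww a1 a2 y * (H y * P y)) \<longlongrightarrow> 0) (at z within ?S)"
    if z: "z \<in> frontier ?S" and cP: "continuous_on UNIV P" for z and P :: "real \<times> real \<Rightarrow> real"
  proof -
    have "(P \<longlongrightarrow> P z) (at z within ?S)"
      using cP continuous_on_def by (metis UNIV_I continuous_on_subset subset_UNIV tendsto_within_subset)
    then have "((\<lambda>y. ww a1 a2 y * (H y * P y)) \<longlongrightarrow> 0 * (H z * P z)) (at z within ?S)"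
      by (intro tendsto_mult ww_tend[OF a z] tend_closure[OF cH z])
    then show ?thesis by simp
  qed
  have I1: "integral ?S e1 = 0"
  proof (rule chord_good1[OF a ge1, where g = "\<lambda>y. ww a1 a2 y * (H y * P1 p0 a1 a2 y)"])
    fix y assume y: "y \<in> ?S"
    show "((\<lambda>t. ww a1 a2 (t, snd y) * (H (t, snd y) * P1 p0 a1 a2 (t, snd y))) has_real_derivative e1 y) (at (fst y))"
      by (rule DERIV_cong[OF DERIV_mult[OF ww_d1[OF a] DH1[OF y]]]) (simp add: e1_def)
  next
    fix z assume z: "z \<in> frontier ?S"
    show "((\<lambda>y. ww a1 a2 y * (H y * P1 p0 a1 a2 y)) \<longlongrightarrow> 0) (at z within ?S)"
      using tHP[OF z P_cont(1)[OF a]] .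
  qed
  have I2: "integral ?S e2 = 0"
  proof (rule chord_good2[OF a ge2, where g = "\<lambda>y. ww a1 a2 y * (H y * P2 p0 a1 a2 y)"])
    fix y assume y: "y \<in> ?S"
    show "((\<lambda>t. ww a1 a2 (fst y, t) * (H (fst y, t) * P2 p0 a1 a2 (fst y, t))) has_real_derivative e2 y) (at (snd y))"
      by (rule DERIV_cong[OF DERIV_mult[OF ww_d2[OF a] DH2[OF y]]]) (simp add: e2_def)
  next
    fix z assume z: "z \<in> frontier ?S"
    show "((\<lambda>y. ww a1 a2 y * (H y * P2 p0 a1 a2 y)) \<longlongrightarrow> 0) (at z within ?S)"
      using tHP[OF z P_cont(2)[OF a]] .
  qed
  have gHr: "good ?S (\<lambda>y. H y * rho a1 a2 y)" by (intro good_mult gH gP)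
  then show "good ?S (\<lambda>y. H y * rho a1 a2 y)" .
  have gwd: "good ?S (\<lambda>y. ww a1 a2 y * div_H_grad H (pbar p0 a1 a2) y)"
    by (rule good_cong[of _ "\<lambda>y. ww a1 a2 y * (E1 y + E2 y)"]) (intro good_mult good_add gw gE1 gE2, simp add: divE)
  then show "good ?S (\<lambda>y. ww a1 a2 y * div_H_grad H (pbar p0 a1 a2) y)" .
  have gKHr: "good ?S (\<lambda>y. ?K * (H y * rho a1 a2 y))" by (intro good_mult good_const gHr)
  have "0 = integral ?S (\<lambda>y. e1 y + e2 y)"
    using I1 I2 integral_add[OF good_int[OF ge1 a] good_int[OF ge2 a]] by simp
  also have "\<dots> = integral ?S (\<lambda>y. ?K * (H y * rho a1 a2 y) + ww a1 a2 y * div_H_grad H (pbar p0 a1 a2) y)"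
  proof (rule integral_cong)
    fix y assume y: "y \<in> ?S"
    have "e1 y + e2 y = H y * (q1 a1 a2 y * P1 p0 a1 a2 y + q2 a1 a2 y * P2 p0 a1 a2 y)
        + ww a1 a2 y * (E1 y + E2 y)"
      by (simp add: e1_def e2_def algebra_simps)
    also have "\<dots> = ?K * (H y * rho a1 a2 y) + ww a1 a2 y * div_H_grad H (pbar p0 a1 a2) y"
      using rho_id[OF a, of y p0] divE[OF y] by simp
    finally show "e1 y + e2 y = ?K * (H y * rho a1 a2 y) + ww a1 a2 y * div_H_grad H (pbar p0 a1 a2) y" .
  qed
  also have "\<dots> = ?K * integral ?S (\<lambda>y. H y * rho a1 a2 y) + integral ?S (\<lambda>y. ww a1 a2 y * div_H_grad H (pbar p0 a1 a2) y)"
    using integral_add[OF good_int[OF gKHr a] good_int[OF gwd a]] integral_mult[OF good_int[OF gHr a], of ?K]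
    by simp
  finally show "integral ?S (\<lambda>y. ww a1 a2 y * div_H_grad H (pbar p0 a1 a2) y)
       = - ?K * integral ?S (\<lambda>y. H y * rho a1 a2 y)" by simp
qed



theorem mainTheorem1:
  fixes a1 a2 p0 m h1 h2 E1 E2 :: real
    and H1 H2 p :: "real \<times> real \<Rightarrow> real"
  assumes "a1 > 0" "a2 > 0" "p0 > 0" "m > 0" "h1 > 0" "h2 > 0" "E1 > 0" "E2 > 0"
    and "C1_closure (ellipse a1 a2) H1" "C1_closure (ellipse a1 a2) H2"
    and "C2_closure (ellipse a1 a2) p"
    and "\<forall>y \<in> ellipse a1 a2.
           - (1 / m) * laplacian p y =
             3 * h1\<^sup>2 / E1 * div_H_grad H1 (pbar p0 a1 a2) y
           + 3 * h2\<^sup>2 / E2 * div_H_grad H2 (pbar p0 a1 a2) y"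
    and "\<forall>y \<in> frontier (ellipse a1 a2). p y = 0"
  shows "integral (ellipse a1 a2) p = 0 \<longleftrightarrow>
    h1\<^sup>2 / E1 * integral (ellipse a1 a2) (\<lambda>y. H1 y * rho a1 a2 y)
  + h2\<^sup>2 / E2 * integral (ellipse a1 a2) (\<lambda>y. H2 y * rho a1 a2 y) = 0"
proof -
  let ?S = "ellipse a1 a2"
  let ?K = "8 * p0 / (kk a1 a2 * a1 * a2)"
  let ?c1 = "h1\<^sup>2 / E1" and ?c2 = "h2\<^sup>2 / E2"
  let ?W1 = "\<lambda>y. ww a1 a2 y * div_H_grad H1 (pbar p0 a1 a2) y"
  let ?W2 = "\<lambda>y. ww a1 a2 y * div_H_grad H2 (pbar p0 a1 a2) y"
  have a: "a1 > 0" "a2 > 0" using assms by auto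
  note hp1 = H_part(1-2)[OF a assms(9), where ?p0.0=p0] and hp2 = H_part(1-2)[OF a assms(10), where ?p0.0=p0]
  note pp = p_part[OF a assms(11) assms(13)]
  have lap: "ww a1 a2 y * laplacian p y = -m * (3 * ?c1 * ?W1 y + 3 * ?c2 * ?W2 y)" if "y \<in> ?S" for y
  proof -
    have L: "laplacian p y = -m * (3 * h1\<^sup>2 / E1 * div_H_grad H1 (pbar p0 a1 a2) y
           + 3 * h2\<^sup>2 / E2 * div_H_grad H2 (pbar p0 a1 a2) y)"
      using assms(12) that assms(4) by (auto simp: field_simps)
    have "E1 \<noteq> 0" "E2 \<noteq> 0" using assms by auto
    then show ?thesis unfolding L by (simp add: field_simps)
  qed
  have gA: "good ?S (\<lambda>y. 3 * ?c1 * ?W1 y)" by (intro good_mult good_const hp1(2))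
  have gB: "good ?S (\<lambda>y. 3 * ?c2 * ?W2 y)" by (intro good_mult good_const hp2(2))
  have "integral ?S (\<lambda>y. ww a1 a2 y * laplacian p y) = integral ?S (\<lambda>y. -m * (3 * ?c1 * ?W1 y + 3 * ?c2 * ?W2 y))"
    by (rule integral_cong) (rule lap)
  also have "\<dots> = -m * (3 * ?c1 * integral ?S ?W1 + 3 * ?c2 * integral ?S ?W2)"
    using integral_mult[OF integrable_add[OF good_int[OF gA a] good_int[OF gB a]], of "-m"]
      integral_add[OF good_int[OF gA a] good_int[OF gB a]]
      integral_mult[OF good_int[OF hp1(2) a], of "3 * ?c1"] integral_mult[OF good_int[OF hp2(2) a], of "3 * ?c2"]
    by simp
  finally have "integral ?S p = m * (3 * ?c1 * integral ?S ?W1 + 3 * ?c2 * integral ?S ?W2)"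
    using pp(1) by simp
  also have "\<dots> = - (3 * m * ?K) * (?c1 * integral ?S (\<lambda>y. H1 y * rho a1 a2 y) + ?c2 * integral ?S (\<lambda>y. H2 y * rho a1 a2 y))"
    using hp1(1) hp2(1) by (simp add: algebra_simps)
  finally have eq: "integral ?S p = - (3 * m * ?K) * (?c1 * integral ?S (\<lambda>y. H1 y * rho a1 a2 y) + ?c2 * integral ?S (\<lambda>y. H2 y * rho a1 a2 y))" .
  have "?K > 0" using assms kk_pos[OF a] by simp
  then have "3 * m * ?K \<noteq> 0" using assms by (metis mult_pos_pos zero_less_numeral less_irrefl)
  then show ?thesis using eq by simp
qed

end
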